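(* Let $\mathfrak{n}$ be a Heisenberg Lie algebra over $K$ of dimension $n\ge5$. Then every LR-structure on $\mathfrak{n}$ is complete, i.e. all its left multiplication operators are nilpotent.
   Context: $K$ is a field of characteristic zero. An LR-structure on a Lie algebra $\mathfrak{n}=(V,\{\,,\})$ is a bilinear product $x*y$ on $V$ such that for all $x,y,z\in V$: $x*y-y*x=\{x,y\}$, $x*(y*z)=y*(x*z)$, and $x*\{y,z\}=\{x*y,z\}+\{y,x*z\}$. It is complete if all left multiplications $y\mapsto x*y$ are nilpotent. The Heisenberg Lie algebra of dimension $2m+1$ has a basis $e_1,\dots,e_m,f_1,\dots,f_m,z$ with nonzero brackets $\{e_i,f_i\}=z$. *)

theory Defs
  imports Main
begin

text \<open>Vectors of a finite-dimensional K-vector space with basis indexed by a finite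
type 'a are functions 'a => K.  A bilinear product on such a space is exactly
one given by structure constants T i j k.\<close>

definition bilin_of :: "('a::finite \<Rightarrow> 'a \<Rightarrow> 'a \<Rightarrow> 'k::field) \<Rightarrow> ('a \<Rightarrow> 'k) \<Rightarrow> ('a \<Rightarrow> 'k) \<Rightarrow> ('a \<Rightarrow> 'k)"
  where "bilin_of T x y = (\<lambda>k. \<Sum>i\<in>UNIV. \<Sum>j\<in>UNIV. x i * y j * T i j k)"

text \<open>Heisenberg Lie algebra of dimension 2m+1, m = CARD('i): basis
e_i = Inl i, f_i = Inr (Inl i), z = Inr (Inr ()), with {e_i,f_i} = z.\<close>

type_synonym 'i heis_idx = "'i + 'i + unit"

definition heis_bracket :: "('i::finite heis_idx \<Rightarrow> 'k::field) \<Rightarrow> ('i heis_idx \<Rightarrow> 'k) \<Rightarrow> ('i heis_idx \<Rightarrow> 'k)"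
  where "heis_bracket x y = (\<lambda>k. if k = Inr (Inr ())
      then (\<Sum>i\<in>UNIV. x (Inl i) * y (Inr (Inl i)) - x (Inr (Inl i)) * y (Inl i))
      else 0)"

definition LR_structure :: "(('a \<Rightarrow> 'k::field) \<Rightarrow> ('a \<Rightarrow> 'k) \<Rightarrow> ('a \<Rightarrow> 'k))
     \<Rightarrow> (('a \<Rightarrow> 'k) \<Rightarrow> ('a \<Rightarrow> 'k) \<Rightarrow> ('a \<Rightarrow> 'k)) \<Rightarrow> bool"
  where "LR_structure br p \<longleftrightarrow>
     (\<forall>x y. (\<lambda>k. p x y k - p y x k) = br x y) \<and>
     (\<forall>x y z. p x (p y z) = p y (p x z)) \<and>
     (\<forall>x y z. p x (br y z) = (\<lambda>k. br (p x y) z k + br y (p x z) k))"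

definition complete_LR :: "(('a \<Rightarrow> 'k::field) \<Rightarrow> ('a \<Rightarrow> 'k) \<Rightarrow> ('a \<Rightarrow> 'k)) \<Rightarrow> bool"
  where "complete_LR p \<longleftrightarrow> (\<forall>x. \<exists>N. \<forall>y. (p x ^^ N) y = (\<lambda>_. 0))"

end

theory Submission
  imports Defs
begin

definition zv :: "'i::finite heis_idx \<Rightarrow> 'k::field" where
  "zv = (\<lambda>k. if k = Inr (Inr ()) then 1 else 0)"
definition om :: "('i::finite heis_idx \<Rightarrow> 'k::field) \<Rightarrow> ('i heis_idx \<Rightarrow> 'k) \<Rightarrow> 'k" where
  "om x y = (\<Sum>i\<in>UNIV. x (Inl i) * y (Inr (Inl i)) - x (Inr (Inl i)) * y (Inl i))"
definition ev :: "'i::finite \<Rightarrow> 'i heis_idx \<Rightarrow> 'k::field" where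
  "ev j = (\<lambda>k. if k = Inl j then 1 else 0)"
definition fv :: "'i::finite \<Rightarrow> 'i heis_idx \<Rightarrow> 'k::field" where
  "fv j = (\<lambda>k. if k = Inr (Inl j) then 1 else 0)"

lemma br_eq: "heis_bracket x y = (\<lambda>k. om x y * zv k)"
  by (auto simp: heis_bracket_def om_def zv_def)

lemma om_zv1: "om zv y = 0" by (simp add: om_def zv_def)
lemma om_zv2: "om y zv = 0" by (simp add: om_def zv_def)
lemma om_antisym: "om x y = - om y x"
  by (simp add: om_def sum_negf[symmetric] algebra_simps)
lemma om_lin1: "om (\<lambda>k. u k + c * v k) w = om u w + c * om v w"
  by (simp add: om_def algebra_simps sum.distrib sum_distrib_left sum_subtractf)
lemma om_fv: "om x (fv j) = x (Inl j)"
proof -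
  have "om x (fv j) = (\<Sum>i\<in>UNIV. if i = j then x (Inl j) else 0)"
    unfolding om_def fv_def by (rule sum.cong) auto
  then show ?thesis by simp
qed
lemma om_ev: "om x (ev j) = - x (Inr (Inl j))"
proof -
  have "om x (ev j) = (\<Sum>i\<in>UNIV. if i = j then - x (Inr (Inl j)) else 0)"
    unfolding om_def ev_def by (rule sum.cong) auto
  then show ?thesis by simp
qed

lemma bl_lin2: "bilin_of T x (\<lambda>k. u k + c * v k) = (\<lambda>k. bilin_of T x u k + c * bilin_of T x v k)"
  unfolding bilin_of_def
  by (rule ext) (simp add: algebra_simps sum.distrib sum_distrib_left)
lemma bl_smult2: "bilin_of T x (\<lambda>k. c * v k) = (\<lambda>k. c * bilin_of T x v k)"
  unfolding bilin_of_def
  by (rule ext) (simp add: algebra_simps sum.distrib sum_distrib_left)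

theorem corollary4p12:
  fixes T :: "'i::finite heis_idx \<Rightarrow> 'i heis_idx \<Rightarrow> 'i heis_idx \<Rightarrow> 'k::field_char_0"
  assumes "card (UNIV :: 'i set) \<ge> 2"
    and "LR_structure heis_bracket (bilin_of T)"
  shows "complete_LR (bilin_of T)"
proof -
  define p where "p = bilin_of T"
  define Z :: "'i heis_idx" where "Z = Inr (Inr ())"
  have zvZ: "zv Z = (1::'k)" by (simp add: zv_def Z_def)
  have A1: "\<And>x y. (\<lambda>k. p x y k - p y x k) = heis_bracket x y"
   and A2: "\<And>x y w. p x (p y w) = p y (p x w)"
   and A3: "\<And>x y w. p x (heis_bracket y w) = (\<lambda>k. heis_bracket (p x y) w k + heis_bracket y (p x w) k)"
    using assms(2) unfolding LR_structure_def p_def by blast+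
  have P1: "\<And>x y. p x y = (\<lambda>k. p y x k + om x y * zv k)"
  proof
    fix x y k
    have "p x y k - p y x k = om x y * zv k" using fun_cong[OF A1[of x y], of k] by (simp add: br_eq)
    then show "p x y k = p y x k + om x y * zv k" by (simp add: algebra_simps)
  qed
  obtain i0 j0 :: 'i where ij: "i0 \<noteq> j0"
  proof -
    have "\<exists>i0 j0::'i. i0 \<noteq> j0"
    proof (rule ccontr)
      assume "\<not> ?thesis"
      then have "UNIV \<subseteq> {undefined::'i}" by auto
      then have "card (UNIV::'i set) \<le> 1" using card_mono[OF _ \<open>UNIV \<subseteq> {undefined::'i}\<close>] by simp
      then show False using assms(1) by simp
    qed
    then show ?thesis using that by blast
  qed
  have oef: "\<And>j. om (ev j) (fv j) = (1::'k)" by (simp add: om_fv ev_def)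
  have zv_br: "(zv::'i heis_idx \<Rightarrow> 'k) = heis_bracket (ev i0) (fv i0)"
    by (simp add: br_eq oef)
  define lam where "lam x = p x zv Z" for x
  have S1: "\<And>x. p x zv = (\<lambda>k. lam x * zv k)"
  proof
    fix x k
    have e: "\<And>k. p x zv k = (om (p x (ev i0)) (fv i0) + om (ev i0) (p x (fv i0))) * zv k"
      by (subst zv_br, subst A3) (simp add: br_eq algebra_simps)
    have "lam x = om (p x (ev i0)) (fv i0) + om (ev i0) (p x (fv i0))"
      unfolding lam_def using e[of Z] zvZ by simp
    then show "p x zv k = lam x * zv k" using e[of k] by simp
  qed
  have D: "\<And>x y w. om y w * lam x = om (p x y) w + om y (p x w)"
  proof -
    fix x y w
    have "p x (heis_bracket y w) Z = om y w * lam x"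
      by (simp add: br_eq p_def bl_smult2 S1[unfolded p_def] zvZ)
    moreover have "p x (heis_bracket y w) Z = om (p x y) w + om y (p x w)"
      by (subst A3) (simp add: br_eq zvZ)
    ultimately show "om y w * lam x = om (p x y) w + om y (p x w)" by simp
  qed
  have Psym: "\<And>x y w. om (p x y) w = om (p y x) w"
    by (subst P1) (simp add: om_lin1 om_zv1)
  have Cyc: "\<And>x y w. lam x * om y w + lam y * om w x + lam w * om x y = 0"
  proof -
    fix x y w
    have d1: "om y w * lam x = om (p x y) w - om (p x w) y" using D[of y w x] om_antisym[of y "p x w"] by simp
    have d2: "om w x * lam y = om (p y w) x - om (p y x) w" using D[of w x y] om_antisym[of w "p y x"] by simp
    have d3: "om x y * lam w = om (p w x) y - om (p w y) x" using D[of x y w] om_antisym[of x "p w y"] by simp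
    have "lam x * om y w + lam y * om w x + lam w * om x y
       = (om (p x y) w - om (p x w) y) + (om (p y w) x - om (p y x) w) + (om (p w x) y - om (p w y) x)"
      using d1 d2 d3 by (simp add: mult.commute)
    also have "\<dots> = 0" using Psym[of x y w] Psym[of w x y] Psym[of y w x] by simp
    finally show "lam x * om y w + lam y * om w x + lam w * om x y = 0" .
  qed
  have Ex: "\<And>j x. lam x = lam (ev j) * x (Inl j) + lam (fv j) * x (Inr (Inl j))"
  proof -
    fix j x
    have "lam x * om (ev j) (fv j) + lam (ev j) * om (fv j) x + lam (fv j) * om x (ev j) = 0" by (rule Cyc)
    moreover have o1: "om (fv j) x = - x (Inl j)" using om_antisym[of "fv j" x] by (simp add: om_fv)
    ultimately have "lam x + lam (ev j) * (- x (Inl j)) + lam (fv j) * (- x (Inr (Inl j))) = 0"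
      by (simp only: oef om_ev mult_1_right)
    then show "lam x = lam (ev j) * x (Inl j) + lam (fv j) * x (Inr (Inl j))"
      by (simp add: algebra_simps eq_neg_iff_add_eq_0 add_eq_0_iff2)
  qed
  have le0: "lam (ev j0) = 0" using Ex[of "ev j0" i0] ij by (simp add: ev_def)
  have lf0: "lam (fv j0) = 0" using Ex[of "fv j0" i0] ij by (simp add: fv_def)
  have L0: "\<And>x. lam x = 0" using Ex[of _ j0] le0 lf0 by simp
  have S0: "\<And>x k. p x zv k = 0" using S1 L0 by simp
  have D': "\<And>x y w. om (p x y) w = om (p x w) y"
    using D L0 om_antisym by (metis add_eq_0_iff mult_zero_right)
  have T2: "\<And>a b c. p a (p b c) = p a (p c b)"
  proof -
    fix a b c
    show "p a (p b c) = p a (p c b)"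
      by (subst P1[of b c]) (simp add: p_def bl_lin2 S0[unfolded p_def])
  qed
  define R where "R a b c d = om (p a (p b c)) d" for a b c d
  have Rform: "\<And>a b c d. R a b c d = om (p d a) (p b c)"
    unfolding R_def using D' Psym by metis
  have R14: "\<And>a b c d. R a b c d = R d b c a"
    unfolding R_def using D' Psym by metis
  have R12: "\<And>a b c d. R a b c d = R b a c d" unfolding R_def using A2 by metis
  have R23: "\<And>a b c d. R a b c d = R a c b d" unfolding R_def using T2 by metis
  have Rs: "\<And>a b c d. R c d a b = R a b c d"
    by (metis R14 R12 R23)
  have R0: "\<And>a b c d. R a b c d = 0"
  proof -
    fix a b c d
    have "R c d a b = - R a b c d" using Rform[of c d a b] Rform[of a b c d] om_antisym by metis
    then have h: "R a b c d = - R a b c d" using Rs by metis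
    have "R a b c d + R a b c d = 0" by (subst (2) h) (rule add.right_inverse)
    then have "2 * R a b c d = 0" by (simp only: mult_2)
    then show "R a b c d = 0" by simp
  qed
  have Tz: "\<And>a b c. p a (p b c) = (\<lambda>k. p a (p b c) Z * zv k)"
  proof
    fix a b c k
    show "p a (p b c) k = p a (p b c) Z * zv k"
    proof (cases k)
      case (Inl j)
      then show ?thesis using R0[of a b c "fv j"] by (simp add: R_def om_fv zv_def)
    next
      case (Inr k')
      then show ?thesis
      proof (cases k')
        case (Inl j)
        then show ?thesis using Inr R0[of a b c "ev j"] by (simp add: R_def om_ev zv_def)
      next
        case (Inr u)
        then show ?thesis using \<open>k = Inr k'\<close> by (simp add: zv_def Z_def)
      qed
    qed
  qed
  show ?thesis
    unfolding complete_LR_def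
  proof (intro allI exI)
    fix x y
    have "(bilin_of T x ^^ 3) y = p x (p x (p x y))" by (simp add: p_def numeral_3_eq_3)
    also have "\<dots> = (\<lambda>_. 0)"
      by (subst Tz) (simp add: p_def bl_smult2 S0[unfolded p_def])
    finally show "(bilin_of T x ^^ 3) y = (\<lambda>_. 0)" .
  qed
qed

end
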